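(* Let $1\le n<N$. Then for all $\epsilon>0$, \[ \Pr\Big(\max_{n\le k\le N-1}\frac{\sum_{t=1}^k (X_t-\mu)}{k}\ge \epsilon\Big)\le \exp\Big(-\frac{2n\epsilon^2}{(1-n/N)(1+1/n)(b-a)^2}\Big), \] and \[ \Pr\Big(\max_{1\le k\le n}\frac{\sum_{t=1}^k (X_t-\mu)}{N-k}\ge \frac{n\epsilon}{N-n}\Big)\le \exp\Big(-\frac{2n\epsilon^2}{(1-(n-1)/N)(b-a)^2}\Big). \]
   Context: Let $N\ge 2$ and let $\mathcal X=(x_1,\dots,x_N)$ be a finite population of real numbers (repetitions allowed). Let $(X_1,\dots,X_N)=(x_{\pi(1)},\dots,x_{\pi(N)})$, where $\pi$ is a uniformly random permutation of $\{1,\dots,N\}$. For $n\le N$, $(X_1,\dots,X_n)$ is therefore a sample of size $n$ drawn uniformly without replacement from $\mathcal X$. Let $\mu=\frac1N\sum_{i=1}^N x_i$, $a=\min_i x_i$ and $b=\max_i x_i$. *)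

theory Defs
  imports "HOL-Probability.Probability"
begin

text \<open>Uniform distribution on the permutations of the index set {1..N}.
  A permutation pi gives the random sequence X_t = x (pi t), t = 1..N.\<close>
definition perm_pmf :: "nat \<Rightarrow> (nat \<Rightarrow> nat) pmf" where
  "perm_pmf N = pmf_of_set {\<pi>. \<pi> permutes {1..N}}"

definition centred_sum :: "(nat \<Rightarrow> real) \<Rightarrow> real \<Rightarrow> (nat \<Rightarrow> nat) \<Rightarrow> nat \<Rightarrow> real" where
  "centred_sum x \<mu> \<pi> k = (\<Sum>t=1..k. x (\<pi> t) - \<mu>)"

end

theory Submission
  imports Defs "HOL-Combinatorics.Multiset_Permutations"
begin

definition lp :: "'a set \<Rightarrow> ('a list \<Rightarrow> bool) \<Rightarrow> real" where
  "lp A Q = card {xs \<in> permutations_of_set A. Q xs} / card (permutations_of_set A)"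

lemma lp_nonneg: "lp A Q \<ge> 0" by (simp add: lp_def)

lemma lp_le1: "lp A Q \<le> 1"
proof -
  have "real (card {xs \<in> permutations_of_set A. Q xs}) \<le> real (card (permutations_of_set A))"
    by (intro of_nat_mono card_mono) auto
  then show ?thesis
  proof (cases "card (permutations_of_set A) = 0")
    case False
    then have "real (card (permutations_of_set A)) > 0" by simp
    with \<open>real (card {xs \<in> permutations_of_set A. Q xs}) \<le> real (card (permutations_of_set A))\<close>
    show ?thesis unfolding lp_def by (simp only: divide_le_eq_1) simp
  qed (simp add: lp_def permutations_of_set_infinite)
qed

lemma lp_rec:
  assumes fin: "finite A" and ne: "A \<noteq> {}"
  shows "lp A Q = (\<Sum>a\<in>A. lp (A - {a}) (\<lambda>xs. Q (a # xs))) / card A"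
proof -
  have eq: "{xs \<in> permutations_of_set A. Q xs} = (\<Union>a\<in>A. (#) a ` {xs \<in> permutations_of_set (A - {a}). Q (a # xs)})"
    by (subst permutations_of_set_nonempty[OF ne]) auto
  have "card {xs \<in> permutations_of_set A. Q xs} = (\<Sum>a\<in>A. card ((#) a ` {xs \<in> permutations_of_set (A - {a}). Q (a # xs)}))"
    unfolding eq by (rule card_UN_disjoint) (use fin in auto)
  also have "\<dots> = (\<Sum>a\<in>A. card {xs \<in> permutations_of_set (A - {a}). Q (a # xs)})"
    by (intro sum.cong refl card_image) auto
  finally have c: "card {xs \<in> permutations_of_set A. Q xs} = (\<Sum>a\<in>A. card {xs \<in> permutations_of_set (A - {a}). Q (a # xs)})" .
  have cA: "card A > 0" using fin ne by (simp add: card_gt_0_iff)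
  have f: "fact (card A) = (real (card A) * fact (card A - 1) :: real)"
    using cA by (metis Suc_pred' fact_Suc of_nat_mult mult.commute)
  have "lp A Q = (\<Sum>a\<in>A. real (card {xs \<in> permutations_of_set (A - {a}). Q (a # xs)})) / (real (card A) * fact (card A - 1))"
    unfolding lp_def using fin by (simp add: c f)
  also have "\<dots> = (\<Sum>a\<in>A. lp (A - {a}) (\<lambda>xs. Q (a # xs))) / card A"
    unfolding lp_def using fin cA
    by (simp add: card_Diff_singleton sum_divide_distrib[symmetric] field_simps)
  finally show ?thesis .
qed
lemma hoeff_finite:
  fixes y :: "'a \<Rightarrow> real"
  assumes fin: "finite A" and ne: "A \<noteq> {}" and rng: "\<And>v. v \<in> A \<Longrightarrow> y v \<in> {lo..hi}" and l: "l > 0"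
  shows "(\<Sum>v\<in>A. exp (l * (y v - (\<Sum>w\<in>A. y w) / card A))) / card A \<le> exp (l\<^sup>2 * (hi - lo)\<^sup>2 / 8)"
proof -
  interpret interval_bounded_random_variable "measure_pmf (pmf_of_set A)" y lo hi
    by unfold_locales (use fin ne rng in \<open>auto simp: AE_measure_pmf_iff\<close>)
  have E: "integral\<^sup>L (measure_pmf (pmf_of_set A)) y = (\<Sum>w\<in>A. y w) / card A"
    by (rule integral_pmf_of_set[OF ne fin])
  have "nn_integral (measure_pmf (pmf_of_set A)) (\<lambda>x. exp (l * (y x - integral\<^sup>L (measure_pmf (pmf_of_set A)) y))) \<le> ennreal (exp (l\<^sup>2 * (hi - lo)\<^sup>2 / 8))"
    by (rule Hoeffdings_lemma_nn_integral) (use l in auto)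
  also have "nn_integral (measure_pmf (pmf_of_set A)) (\<lambda>x. exp (l * (y x - integral\<^sup>L (measure_pmf (pmf_of_set A)) y)))
     = ennreal ((\<Sum>v\<in>A. exp (l * (y v - (\<Sum>w\<in>A. y w) / card A))) / card A)"
  proof -
    have cp: "card A > 0" using fin ne by (simp add: card_gt_0_iff)
    have "ennreal (\<Sum>v\<in>A. exp (l * (y v - (\<Sum>w\<in>A. y w) / card A))) / ennreal (real (card A)) = ennreal ((\<Sum>v\<in>A. exp (l * (y v - (\<Sum>w\<in>A. y w) / card A))) / card A)"
      by (rule divide_ennreal) (use cp in \<open>auto intro: sum_nonneg\<close>)
    then show ?thesis
      by (subst nn_integral_pmf_of_set[OF ne fin]) (simp add: E sum_ennreal ennreal_of_nat_eq_real_of_nat)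
  qed
  finally show ?thesis by (subst (asm) ennreal_le_iff) auto
qed

lemma aux: "(d::real) \<noteq> 0 \<Longrightarrow> d+1 \<noteq> 0 \<Longrightarrow> c1 * (q+(w-m0)) / d = c1 * q / (d+1) + c1 / d * (w-(m0 - q / (d+1)))"
proof -
  assume h: "d \<noteq> 0" "d+1 \<noteq> 0"
  have "c1 / d * (w-(m0 - q / (d+1))) = c1 * (w-m0) / d + c1  *  q  / (d * (d+1))" using h by (simp add: algebra_simps diff_divide_distrib add_divide_distrib)
  moreover have "c1 * q / (d+1) + c1  *  q  / (d * (d+1)) = c1 * q / d"
  proof -
    have "c1 * q / (d+1) = (c1 * q * d) / (d * (d+1))" using h by simp
    moreover have "c1 * q / (d+1) + c1  *  q  / (d * (d+1)) = (c1 * q * d) / (d * (d+1)) + c1  *  q  / (d * (d+1))" using calculation by simp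
    moreover have "(c1 * q * d) / (d * (d+1)) + c1  *  q  / (d * (d+1)) = ((c1 * q) * (d+1)) / (d * (d+1))" by (simp add: add_divide_distrib[symmetric] algebra_simps)
    moreover have "((c1 * q) * (d+1)) / (d * (d+1)) = c1 * q / d" using h by simp
    ultimately show ?thesis by simp
  qed
  moreover have "c1 * (q+(w-m0)) / d = c1 * q / d + c1 * (w-m0) / d" by (simp only: distrib_left add_divide_distrib)
  ultimately show ?thesis by simp
qed

fun hit :: "(nat \<Rightarrow> real) \<Rightarrow> real \<Rightarrow> nat \<Rightarrow> real \<Rightarrow> nat \<Rightarrow> real \<Rightarrow> nat list \<Rightarrow> nat \<Rightarrow> bool" where
  "hit y \<mu> N c k s vs 0 = False"
| "hit y \<mu> N c k s [] (Suc j) = False"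
| "hit y \<mu> N c k s (v # vs) (Suc j) =
     (c \<le> (s + (y v - \<mu>)) / (real N - real (Suc k)) \<or> hit y \<mu> N c (Suc k) (s + (y v - \<mu>)) vs j)"

lemma main_ind:
  fixes y :: "nat \<Rightarrow> real"
  assumes rng: "\<And>v. v \<in> U \<Longrightarrow> y v \<in> {lo..hi}" and lam: "L > 0"
  shows "finite A \<Longrightarrow> A \<subseteq> U \<Longrightarrow> card A + k = N \<Longrightarrow> k + j < N \<Longrightarrow> s = - (\<Sum>a\<in>A. y a - \<mu>) \<Longrightarrow>
    lp A (\<lambda>xs. hit y \<mu> N c k s xs j) \<le> exp (L * s / (real N - real k) - L * c
        + L\<^sup>2 * ((hi - lo)\<^sup>2 / 8) * (\<Sum>i\<in>{Suc k..k+j}. 1 / (real N - real i)\<^sup>2))"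
proof (induction j arbitrary: A k s)
  case 0
  then show ?case by (simp add: lp_def)
next
  case (Suc j)
  define K where "K = (hi - lo)\<^sup>2 / 8"
  define m where "m = card A"
  define d where "d = real N - real (Suc k)"
  define R where "R = (\<Sum>i\<in>{Suc (Suc k)..Suc k + j}. 1 / (real N - real i)\<^sup>2)"
  have K0: "K \<ge> 0" by (simp add: K_def)
  have R0: "R \<ge> 0" by (simp add: R_def sum_nonneg)
  have m2: "m \<ge> 2" using Suc.prems by (simp add: m_def)
  have dm: "d = real m - 1" using Suc.prems by (simp add: d_def m_def)
  have d0: "d > 0" using m2 dm by simp
  have ne: "A \<noteq> {}" using m2 m_def by auto
  have mk: "real N - real k = real m" using Suc.prems by (simp add: m_def)
  define sa where "sa a = s + (y a - \<mu>)" for a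
  have per: "lp (A - {a}) (\<lambda>xs. hit y \<mu> N c k s (a # xs) (Suc j))
      \<le> exp (L * sa a / d - L * c + L\<^sup>2 * K * R)" if a: "a \<in> A" for a
  proof (cases "c \<le> sa a / d")
    case True
    have "lp (A - {a}) (\<lambda>xs. hit y \<mu> N c k s (a # xs) (Suc j)) \<le> 1" by (rule lp_le1)
    also have "1 \<le> exp (L * sa a / d - L * c + L\<^sup>2 * K * R)"
    proof -
      have "L * c \<le> L * (sa a / d)" using True lam by (intro mult_left_mono) auto
      moreover have "L\<^sup>2 * K * R \<ge> 0" using K0 R0 by simp
      ultimately show ?thesis by simp
    qed
    finally show ?thesis .
  next
    case False
    have eq: "(\<lambda>xs. hit y \<mu> N c k s (a # xs) (Suc j)) = (\<lambda>xs. hit y \<mu> N c (Suc k) (sa a) xs j)"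
      using False by (simp add: sa_def d_def)
    have "lp (A - {a}) (\<lambda>xs. hit y \<mu> N c (Suc k) (sa a) xs j)
       \<le> exp (L * sa a / (real N - real (Suc k)) - L * c
        + L\<^sup>2 * ((hi - lo)\<^sup>2 / 8) * (\<Sum>i\<in>{Suc (Suc k)..Suc k+j}. 1 / (real N - real i)\<^sup>2))"
    proof (rule Suc.IH)
      show "finite (A - {a})" using Suc.prems by simp
      show "A - {a} \<subseteq> U" using Suc.prems by auto
      show "card (A - {a}) + Suc k = N" using Suc.prems a ne by (simp add: card_Diff_singleton)
      show "Suc k + j < N" using Suc.prems by simp
      show "sa a = - (\<Sum>a\<in>A - {a}. y a - \<mu>)"
        using Suc.prems a by (simp add: sa_def sum_diff1)
    qed
    then show ?thesis unfolding eq by (simp add: d_def K_def R_def mult.assoc)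
  qed
  have lpA: "lp A (\<lambda>xs. hit y \<mu> N c k s xs (Suc j)) = (\<Sum>a\<in>A. lp (A - {a}) (\<lambda>xs. hit y \<mu> N c k s (a # xs) (Suc j))) / m"
    unfolding m_def by (rule lp_rec) (use Suc.prems ne in auto)
  also have "\<dots> \<le> (\<Sum>a\<in>A. exp (L * sa a / d - L * c + L\<^sup>2 * K * R)) / m"
    by (intro divide_right_mono sum_mono per) auto
  also have "\<dots> = exp (- L * c + L\<^sup>2 * K * R) * ((\<Sum>a\<in>A. exp (L * sa a / d)) / m)"
  proof -
    have "(\<Sum>a\<in>A. exp (L * sa a / d - L * c + L\<^sup>2 * K * R)) = (\<Sum>a\<in>A. exp (L * sa a / d)) * exp (- L * c + L\<^sup>2 * K * R)"
      by (subst sum_distrib_right) (intro sum.cong refl, simp add: exp_add[symmetric] algebra_simps)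
    then show ?thesis by simp
  qed
  also have "(\<Sum>a\<in>A. exp (L * sa a / d)) = exp (L * s / m) * (\<Sum>a\<in>A. exp ((L / d) * (y a - (\<Sum>w\<in>A. y w) / card A)))"
  proof -
    have sA: "(\<Sum>w\<in>A. y w) = m * \<mu> - s"
      using Suc.prems by (simp add: sum_subtractf m_def)
    have "L * sa a / d = L * s / m + (L / d) * (y a - (\<Sum>w\<in>A. y w) / card A)" for a
    proof -
      have mpos: "real m > 0" using m2 by simp
      have M: "(\<Sum>w\<in>A. y w) / card A = \<mu> - s / m" unfolding sA m_def[symmetric] using mpos
        by (simp add: field_simps)
      have md: "real m = d + 1" using dm by simp
      have d1: "d + 1 \<noteq> 0" "d \<noteq> 0" using d0 by auto
      show ?thesis unfolding M sa_def md by (rule aux[OF d1(2) d1(1)])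
    qed
    then show ?thesis by (simp add: exp_add sum_distrib_left)
  qed
  also have "(\<Sum>a\<in>A. exp ((L / d) * (y a - (\<Sum>w\<in>A. y w) / card A))) / m \<le> exp ((L / d)\<^sup>2 * (hi - lo)\<^sup>2 / 8)"
    unfolding m_def by (rule hoeff_finite) (use Suc.prems ne rng lam d0 in auto)
  ultimately have "lp A (\<lambda>xs. hit y \<mu> N c k s xs (Suc j)) \<le>
      exp (- L * c + L\<^sup>2 * K * R) * (exp (L * s / m) * exp ((L / d)\<^sup>2 * (hi - lo)\<^sup>2 / 8))"
    by (smt (verit) exp_gt_zero mult_left_mono mult_nonneg_nonneg times_divide_eq_right)
  also have "\<dots> = exp (L * s / (real N - real k) - L * c
        + L\<^sup>2 * ((hi - lo)\<^sup>2 / 8) * (\<Sum>i\<in>{Suc k..k+Suc j}. 1 / (real N - real i)\<^sup>2))"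
  proof -
    have iv: "{Suc k..k+Suc j} = insert (Suc k) {Suc (Suc k)..Suc k + j}" by auto
    have "(\<Sum>i\<in>{Suc k..k+Suc j}. 1 / (real N - real i)\<^sup>2) = 1 / d\<^sup>2 + R"
      unfolding iv R_def d_def by simp
    then show ?thesis unfolding mk K_def
      by (simp add: exp_add[symmetric] power_divide field_simps)
  qed
  finally show ?case .
qed


lemma hit_iff:
  "j \<le> length vs \<Longrightarrow> hit y \<mu> N c k s vs j \<longleftrightarrow>
     (\<exists>i\<in>{1..j}. c \<le> (s + (\<Sum>t<i. y (vs ! t) - \<mu>)) / (real N - real (k + i)))"
proof (induction j arbitrary: vs k s)
  case 0
  then show ?case by simp
next
  case (Suc j)
  then obtain v vs' where vs: "vs = v # vs'" by (cases vs) auto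
  have lj: "j \<le> length vs'" using Suc.prems vs by simp
  have split: "(\<exists>i\<in>{1..Suc j}. P i) \<longleftrightarrow> P 1 \<or> (\<exists>i\<in>{1..j}. P (Suc i))" for P :: "nat \<Rightarrow> bool"
  proof
    assume "\<exists>i\<in>{1..Suc j}. P i"
    then obtain i where i: "i \<in> {1..Suc j}" "P i" by blast
    show "P 1 \<or> (\<exists>i\<in>{1..j}. P (Suc i))"
    proof (cases "i = 1")
      case False
      then have "i - 1 \<in> {1..j}" "Suc (i - 1) = i" using i by auto
      then show ?thesis using i by metis
    qed (use i in simp)
  next
    assume "P 1 \<or> (\<exists>i\<in>{1..j}. P (Suc i))"
    then show "\<exists>i\<in>{1..Suc j}. P i"
    proof
      assume "P 1" then show ?thesis by force
    next
      assume "\<exists>i\<in>{1..j}. P (Suc i)"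
      then obtain i where "i \<in> {1..j}" "P (Suc i)" by blast
      then show ?thesis by (intro bexI[of _ "Suc i"]) auto
    qed
  qed
  have sh: "(\<Sum>t<Suc i. y (vs ! t) - \<mu>) = (y v - \<mu>) + (\<Sum>t<i. y (vs' ! t) - \<mu>)" for i
    unfolding vs by (subst sum.lessThan_Suc_shift) simp
  have k1: "k + 1 = Suc k" by simp
  have s0: "(\<Sum>t<1. y (vs ! t) - \<mu>) = y v - \<mu>" by (simp add: vs)
  have "(\<exists>i\<in>{1..Suc j}. c \<le> (s + (\<Sum>t<i. y (vs ! t) - \<mu>)) / (real N - real (k + i)))
     \<longleftrightarrow> c \<le> (s + (\<Sum>t<1. y (vs ! t) - \<mu>)) / (real N - real (k + 1)) \<or>
        (\<exists>i\<in>{1..j}. c \<le> (s + (\<Sum>t<Suc i. y (vs ! t) - \<mu>)) / (real N - real (k + Suc i)))"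
    by (rule split)
  also have "\<dots> \<longleftrightarrow> c \<le> (s + (y v - \<mu>)) / (real N - real (Suc k)) \<or>
        (\<exists>i\<in>{1..j}. c \<le> ((s + (y v - \<mu>)) + (\<Sum>t<i. y (vs' ! t) - \<mu>)) / (real N - real (Suc k + i)))"
    by (simp only: s0 sh add.assoc add_Suc_right add_Suc k1)
  also have "\<dots> \<longleftrightarrow> hit y \<mu> N c k s vs (Suc j)"
    unfolding vs hit.simps Suc.IH[OF lj] ..
  finally show ?case by simp
qed

lemma prob_to_lp:
  fixes g :: "nat list \<Rightarrow> nat list"
  assumes ginj: "inj_on g (permutations_of_set {1..N})"
      and gim: "g ` permutations_of_set {1..N} = permutations_of_set {1..N}"
      and PQ: "\<And>\<pi>. \<pi> permutes {1..N} \<Longrightarrow> P \<pi> = Q (g (map \<pi> [1..<Suc N]))"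
  shows "measure_pmf.prob (perm_pmf N) {\<pi>. P \<pi>} = lp {1..N} Q"
proof -
  define Perms where "Perms = {\<pi>. \<pi> permutes {1..N}}"
  define F where "F \<pi> = map \<pi> [1..<Suc N]" for \<pi> :: "nat \<Rightarrow> nat"
  define PS where "PS = permutations_of_set {1..N::nat}"
  have fin: "finite Perms" unfolding Perms_def by (rule finite_permutations) simp
  have ne: "Perms \<noteq> {}" unfolding Perms_def using permutes_id by blast
  have Fin: "F \<pi> \<in> PS" if "\<pi> \<in> Perms" for \<pi>
  proof -
    have p: "\<pi> permutes {1..N}" using that by (simp add: Perms_def)
    have st: "set [1..<Suc N] = {1..N}" by auto
    have "set (map \<pi> [1..<Suc N]) = {1..N}" using permutes_image[OF p] st by simp
    moreover have "distinct (map \<pi> [1..<Suc N])" using permutes_inj_on[OF p] by (simp add: distinct_map)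
    ultimately show ?thesis unfolding F_def PS_def by (rule permutations_of_setI)
  qed
  have Finj: "inj_on F Perms"
  proof (rule inj_onI)
    fix \<pi> \<sigma> assume a: "\<pi> \<in> Perms" "\<sigma> \<in> Perms" "F \<pi> = F \<sigma>"
    then have p: "\<pi> permutes {1..N}" "\<sigma> permutes {1..N}" by (auto simp: Perms_def)
    have "\<forall>t\<in>set [1..<Suc N]. \<pi> t = \<sigma> t" using a(3) unfolding F_def map_eq_conv .
    moreover have "set [1..<Suc N] = {1..N}" by auto
    ultimately have eqin: "\<pi> t = \<sigma> t" if "t \<in> {1..N}" for t using that by metis
    show "\<pi> = \<sigma>"
    proof
      fix t show "\<pi> t = \<sigma> t"
        by (cases "t \<in> {1..N}") (auto simp: eqin permutes_not_in[OF p(1)] permutes_not_in[OF p(2)])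
    qed
  qed
  have cP: "card Perms = card PS"
    unfolding Perms_def PS_def by (simp add: card_permutations)
  have Fim: "F ` Perms = PS"
  proof (rule card_subset_eq)
    show "finite PS" by (simp add: PS_def)
    show "F ` Perms \<subseteq> PS" using Fin by auto
    show "card (F ` Perms) = card PS" using card_image[OF Finj] cP by simp
  qed
  define H where "H = g \<circ> F"
  have Hinj: "inj_on H Perms" unfolding H_def
    by (rule comp_inj_on[OF Finj]) (use ginj Fim in \<open>simp add: PS_def\<close>)
  have Him: "H ` Perms = PS" unfolding H_def image_comp[symmetric] Fim using gim by (simp add: PS_def)
  have ev: "Perms \<inter> {\<pi>. P \<pi>} = {\<pi> \<in> Perms. Q (H \<pi>)}"
    using PQ by (auto simp: Perms_def H_def F_def)
  have im: "H ` {\<pi> \<in> Perms. Q (H \<pi>)} = {xs \<in> PS. Q xs}"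
    using Him by auto
  have "card {\<pi> \<in> Perms. Q (H \<pi>)} = card {xs \<in> PS. Q xs}"
    using card_image[OF inj_on_subset[OF Hinj]] im by (metis (no_types, lifting) mem_Collect_eq subsetI)
  moreover have "measure_pmf.prob (perm_pmf N) {\<pi>. P \<pi>} = card (Perms \<inter> {\<pi>. P \<pi>}) / card Perms"
    unfolding perm_pmf_def Perms_def[symmetric] by (rule measure_pmf_of_set[OF ne fin])
  ultimately show ?thesis unfolding lp_def ev PS_def[symmetric] cP by simp
qed


lemma tele:
  "m < N \<Longrightarrow> (\<Sum>i\<in>{1..m}. 1 / ((real N - real i) * (real N - real i + 1))) = 1 / (real N - real m) - 1 / real N"
proof (induction m)
  case 0
  then show ?case by simp
next
  case (Suc m)
  have iv: "{1..Suc m} = insert (Suc m) {1..m}" by auto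
  have p: "real N - real m - 1 > 0" using Suc.prems by simp
  have "1 / ((real N - real (Suc m)) * (real N - real (Suc m) + 1)) = 1 / (real N - real (Suc m)) - 1 / (real N - real m)"
    using p by (simp add: field_simps)
  then show ?case unfolding iv using Suc by simp
qed

lemma sqbound:
  assumes "m < N"
  shows "(\<Sum>i\<in>{1..m}. 1 / (real N - real i)\<^sup>2) \<le> real m * (real N - real m + 1) / (real N * (real N - real m)\<^sup>2)"
proof -
  define r where "r = real N - real m"
  have r1: "r \<ge> 1" using assms by (simp add: r_def)
  have "(\<Sum>i\<in>{1..m}. 1 / (real N - real i)\<^sup>2) \<le> (\<Sum>i\<in>{1..m}. ((r + 1) / r) * (1 / ((real N - real i) * (real N - real i + 1))))"
  proof (rule sum_mono)
    fix i assume i: "i \<in> {1..m}"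
    define p where "p = real N - real i"
    have pr: "p \<ge> r" using i by (simp add: p_def r_def)
    have p0: "p > 0" using pr r1 by simp
    have "r * (p + 1) \<le> (r + 1) * p" using pr by (simp add: algebra_simps)
    note ineq = this
    have M0: "r * (p * (p + 1)) > 0" using p0 r1 by simp
    have e1: "(1 / p\<^sup>2) * (r * (p * (p + 1))) = r * (p + 1) / p" using p0 by (simp add: power2_eq_square field_simps)
    have e2: "r * (p + 1) / p \<le> r + 1" using p0 ineq by (simp add: divide_le_eq algebra_simps)
    have "1 / p\<^sup>2 \<le> (r + 1) / (r * (p * (p + 1)))" using M0 e1 e2 by (simp add: le_divide_eq)
    then have "1 / p\<^sup>2 \<le> ((r + 1) / r) * (1 / (p * (p + 1)))" by simp
    then show "1 / (real N - real i)\<^sup>2 \<le> ((r + 1) / r) * (1 / ((real N - real i) * (real N - real i + 1)))"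
      by (simp add: p_def)
  qed
  also have "\<dots> = ((r + 1) / r) * (1 / r - 1 / real N)"
    by (subst sum_distrib_left[symmetric]) (simp only: tele[OF assms] r_def)
  also have "\<dots> = real m * (real N - real m + 1) / (real N * (real N - real m)\<^sup>2)"
  proof -
    have N0: "real N > 0" using assms by simp
    have "1 / r - 1 / real N = real m / (real N * r)" using r1 N0 by (simp add: field_simps r_def)
    then show ?thesis using r1 N0 by (simp add: field_simps power2_eq_square r_def)
  qed
  finally show ?thesis .
qed

lemma opt_exp:
  fixes D S c P :: real
  assumes D: "D > 0" and S: "S > 0" and c: "c > 0"
      and H: "\<And>L. L > 0 \<Longrightarrow> P \<le> exp (- L * c + L\<^sup>2 * (D / 8) * S)"
  shows "P \<le> exp (- (2 * c\<^sup>2 / (D * S)))"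
proof -
  define L where "L = 4 * c / (D * S)"
  have L0: "L > 0" using D S c by (simp add: L_def)
  have "- L * c + L\<^sup>2 * (D / 8) * S = - (2 * c\<^sup>2 / (D * S))"
    using D S by (simp add: L_def field_simps power2_eq_square)
  then show ?thesis using H[OF L0] by simp
qed

lemma revsum:
  fixes g :: "nat \<Rightarrow> real"
  shows "i \<le> N \<Longrightarrow> (\<Sum>t<i. g (N - t)) = (\<Sum>u\<in>{Suc (N - i)..N}. g u)"
proof (induction i)
  case 0
  then show ?case by simp
next
  case (Suc i)
  have e: "Suc (N - Suc i) = N - i" using Suc.prems by simp
  have iv: "{N - i..N} = insert (N - i) {Suc (N - i)..N}" by auto
  show ?case using Suc by (simp add: e iv add.commute)
qed

lemma cs_list:
  assumes "k \<le> N"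
  shows "centred_sum x \<mu> \<pi> k = (\<Sum>t<k. x (map \<pi> [1..<Suc N] ! t) - \<mu>)"
proof -
  have "centred_sum x \<mu> \<pi> k = (\<Sum>t<k. x (\<pi> (Suc t)) - \<mu>)"
    unfolding centred_sum_def by (simp add: sum.atLeast1_atMost_eq)
  also have "\<dots> = (\<Sum>t<k. x (map \<pi> [1..<Suc N] ! t) - \<mu>)"
    using assms by (intro sum.cong refl) (simp del: upt_Suc add: nth_upt)
  finally show ?thesis .
qed

lemma cs_rev:
  assumes p: "\<pi> permutes {1..N}" and k: "k \<le> N" and z: "(\<Sum>v\<in>{1..N}. x v - \<mu>) = 0"
  shows "centred_sum x \<mu> \<pi> k = (\<Sum>t<N-k. (- x (rev (map \<pi> [1..<Suc N]) ! t)) - (- \<mu>))"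
proof -
  have nth: "rev (map \<pi> [1..<Suc N]) ! t = \<pi> (N - t)" if "t < N" for t
    using that by (simp del: upt_Suc add: rev_nth nth_upt Suc_diff_Suc)
  have "(\<Sum>t<N-k. (- x (rev (map \<pi> [1..<Suc N]) ! t)) - (- \<mu>)) = (\<Sum>t<N-k. \<mu> - x (\<pi> (N - t)))"
  proof (intro sum.cong refl)
    fix t assume "t \<in> {..<N-k}"
    then have "t < N" by simp
    then show "(- x (rev (map \<pi> [1..<Suc N]) ! t)) - (- \<mu>) = \<mu> - x (\<pi> (N - t))"
      by (simp only: nth)
  qed
  also have "\<dots> = (\<Sum>u\<in>{Suc k..N}. \<mu> - x (\<pi> u))"
    using revsum[of "N - k" N "\<lambda>u. \<mu> - x (\<pi> u)"] k by simp
  finally have r: "(\<Sum>t<N-k. (- x (rev (map \<pi> [1..<Suc N]) ! t)) - (- \<mu>)) = (\<Sum>u\<in>{Suc k..N}. \<mu> - x (\<pi> u))" .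
  have tot: "(\<Sum>u\<in>{1..N}. x (\<pi> u) - \<mu>) = 0"
  proof -
    have "(\<Sum>u\<in>{1..N}. x (\<pi> u) - \<mu>) = (\<Sum>v\<in>\<pi> ` {1..N}. x v - \<mu>)"
      by (subst sum.reindex[OF permutes_inj_on[OF p]]) simp
    then show ?thesis using z permutes_image[OF p] by simp
  qed
  have spl: "{1..N} = {1..k} \<union> {Suc k..N}" using k by auto
  have "(\<Sum>u\<in>{1..N}. x (\<pi> u) - \<mu>) = (\<Sum>u\<in>{1..k}. x (\<pi> u) - \<mu>) + (\<Sum>u\<in>{Suc k..N}. x (\<pi> u) - \<mu>)"
    unfolding spl by (rule sum.union_disjoint) auto
  then have "centred_sum x \<mu> \<pi> k = - (\<Sum>u\<in>{Suc k..N}. x (\<pi> u) - \<mu>)"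
    using tot unfolding centred_sum_def by simp
  also have "\<dots> = (\<Sum>u\<in>{Suc k..N}. \<mu> - x (\<pi> u))"
    by (simp add: sum_negf[symmetric])
  finally show ?thesis using r by simp
qed

lemma fin2:
  fixes D S \<epsilon> :: real and n N :: nat
  assumes D: "D > 0" and n: "1 \<le> n" and nN: "n < N" and S: "S > 0"
    and SB: "S \<le> real n * (real N - real n + 1) / (real N * (real N - real n)\<^sup>2)"
  shows "exp (- (2 * (real n * \<epsilon> / (real N - real n))\<^sup>2 / (D * S)))
     \<le> exp (- (2 * real n * \<epsilon>\<^sup>2) / ((1 - (real n - 1) / real N) * D))"
proof -
  define B where "B = real n * (real N - real n + 1) / (real N * (real N - real n)\<^sup>2)"
  have N0: "real N > 0" and Nn: "real N - real n > 0" and n0: "real n > 0" using n nN by auto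
  have B0: "B > 0" unfolding B_def using N0 Nn n0 by (intro divide_pos_pos mult_pos_pos) auto
  have "2 * (real n * \<epsilon> / (real N - real n))\<^sup>2 / (D * B) = (2 * real n * \<epsilon>\<^sup>2) / ((1 - (real n - 1) / real N) * D)"
  proof -
    have e1: "1 - (real n - 1) / real N = (real N - real n + 1) / real N" using N0 by (simp add: field_simps)
    have e2: "real N - real n + 1 > 0" using Nn by simp
    have gen: "2 * (m * \<epsilon> / q)\<^sup>2 / (D * (m * (q + 1) / (M * q\<^sup>2))) = (2 * m * \<epsilon>\<^sup>2) / ((q + 1) / M * D)"
      if "m > 0" "q > 0" "M > 0" "D > 0" for m q M :: real
    proof -
      have "D + D * q > 0" "D * m + D * (m * q) > 0" using that by (auto intro!: add_pos_pos mult_pos_pos)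
      then show ?thesis using that by (simp add: field_simps power2_eq_square)
    qed
    show ?thesis unfolding e1 B_def using gen[OF n0 Nn N0 D] by simp
  qed
  moreover have "2 * (real n * \<epsilon> / (real N - real n))\<^sup>2 / (D * B) \<le> 2 * (real n * \<epsilon> / (real N - real n))\<^sup>2 / (D * S)"
    using SB S D B0 unfolding B_def[symmetric] by (intro divide_left_mono mult_left_mono mult_pos_pos) auto
  ultimately show ?thesis by simp
qed

lemma fin1:
  fixes D S \<epsilon> :: real and n N :: nat
  assumes D: "D > 0" and n: "1 \<le> n" and nN: "n < N" and S: "S > 0"
    and SB: "S \<le> real (N - n) * (real N - real (N - n) + 1) / (real N * (real N - real (N - n))\<^sup>2)"
  shows "exp (- (2 * \<epsilon>\<^sup>2 / (D * S)))
     \<le> exp (- (2 * real n * \<epsilon>\<^sup>2) / ((1 - real n / real N) * (1 + 1 / real n) * D))"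
proof -
  define B where "B = real (N - n) * (real N - real (N - n) + 1) / (real N * (real N - real (N - n))\<^sup>2)"
  have N0: "real N > 0" and Nn: "real N - real n > 0" and n0: "real n > 0" using n nN by auto
  have rN: "real (N - n) = real N - real n" using nN by simp
  have B0: "B > 0" unfolding B_def rN using N0 Nn n0 by (intro divide_pos_pos mult_pos_pos) auto
  have "2 * \<epsilon>\<^sup>2 / (D * B) = (2 * real n * \<epsilon>\<^sup>2) / ((1 - real n / real N) * (1 + 1 / real n) * D)"
  proof -
    have e1: "1 - real n / real N = (real N - real n) / real N" using N0 by (simp add: field_simps)
    have e2: "1 + 1 / real n = (real n + 1) / real n" using n0 by (simp add: field_simps)
    show ?thesis unfolding e1 e2 B_def rN using N0 Nn n0 D
      by (simp add: field_simps power2_eq_square)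
  qed
  moreover have "2 * \<epsilon>\<^sup>2 / (D * B) \<le> 2 * \<epsilon>\<^sup>2 / (D * S)"
    using SB S D B0 unfolding B_def[symmetric] by (intro divide_left_mono mult_left_mono mult_pos_pos) auto
  ultimately show ?thesis by simp
qed

theorem theorem1:
  fixes x :: "nat \<Rightarrow> real" and N n :: nat and \<epsilon> :: real
  defines "\<mu> \<equiv> (\<Sum>i=1..N. x i) / real N"
      and "a \<equiv> Min (x ` {1..N})"
      and "b \<equiv> Max (x ` {1..N})"
  assumes "2 \<le> N" and "1 \<le> n" and "n < N" and "\<epsilon> > 0"
  shows "measure_pmf.prob (perm_pmf N)
           {\<pi>. Max ((\<lambda>k. centred_sum x \<mu> \<pi> k / real k) ` {n..N-1}) \<ge> \<epsilon>}
         \<le> exp (- (2 * real n * \<epsilon>\<^sup>2) /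
                 ((1 - real n / real N) * (1 + 1 / real n) * (b - a)\<^sup>2))
       \<and> measure_pmf.prob (perm_pmf N)
           {\<pi>. Max ((\<lambda>k. centred_sum x \<mu> \<pi> k / (real N - real k)) ` {1..n})
                 \<ge> real n * \<epsilon> / (real N - real n)}
         \<le> exp (- (2 * real n * \<epsilon>\<^sup>2) /
                 ((1 - (real n - 1) / real N) * (b - a)\<^sup>2))"
proof -
  note N2 = assms(4) and n1 = assms(5) and nN = assms(6) and ep = assms(7)
  have N0: "real N > 0" using N2 by simp
  have rng: "x v \<in> {a..b}" if "v \<in> {1..N}" for v
    unfolding a_def b_def using that by (auto intro: Min_le Max_ge)
  have ab: "a \<le> b" using rng[of 1] N2 by auto
  have z: "(\<Sum>v\<in>{1..N}. x v - \<mu>) = 0"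
    unfolding \<mu>_def using N0 by (simp add: sum_subtractf)
  show ?thesis
  proof (cases "b = a")
    case True
    then show ?thesis by simp
  next
    case False
    define D where "D = (b - a)\<^sup>2"
    have D0: "D > 0" using False ab by (simp add: D_def)
    have Dh: "(b - a)\<^sup>2 / 8 = D / 8" by (simp add: D_def)
    define c2 where "c2 = real n * \<epsilon> / (real N - real n)"
    have c20: "c2 > 0" using n1 nN ep by (simp add: c2_def)
    define S2 where "S2 = (\<Sum>i\<in>{1..n}. 1 / (real N - real i)\<^sup>2)"
    have S20: "S2 > 0" unfolding S2_def
      using n1 nN by (intro sum_pos) auto
    have eq2: "measure_pmf.prob (perm_pmf N)
           {\<pi>. Max ((\<lambda>k. centred_sum x \<mu> \<pi> k / (real N - real k)) ` {1..n}) \<ge> c2}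
        = lp {1..N} (\<lambda>xs. hit x \<mu> N c2 0 0 xs n)"
    proof (rule prob_to_lp[where g = id])
      fix \<pi> :: "nat \<Rightarrow> nat" assume p: "\<pi> permutes {1..N}"
      have "(c2 \<le> Max ((\<lambda>k. centred_sum x \<mu> \<pi> k / (real N - real k)) ` {1..n}))
          \<longleftrightarrow> (\<exists>k\<in>{1..n}. c2 \<le> centred_sum x \<mu> \<pi> k / (real N - real k))"
        using n1 by (subst Max_ge_iff) auto
      also have "\<dots> \<longleftrightarrow> (\<exists>k\<in>{1..n}. c2 \<le> (0 + (\<Sum>t<k. x (map \<pi> [1..<Suc N] ! t) - \<mu>)) / (real N - real (0 + k)))"
      proof (intro bex_cong refl)
        fix k assume "k \<in> {1..n}"
        then have "k \<le> N" using nN by simp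
        then show "(c2 \<le> centred_sum x \<mu> \<pi> k / (real N - real k)) = (c2 \<le> (0 + (\<Sum>t<k. x (map \<pi> [1..<Suc N] ! t) - \<mu>)) / (real N - real (0 + k)))"
          by (subst cs_list[of k N]) simp_all
      qed
      also have "\<dots> \<longleftrightarrow> hit x \<mu> N c2 0 0 (id (map \<pi> [1..<Suc N])) n"
        using nN by (subst hit_iff) auto
      finally show "(c2 \<le> Max ((\<lambda>k. centred_sum x \<mu> \<pi> k / (real N - real k)) ` {1..n})) = hit x \<mu> N c2 0 0 (id (map \<pi> [1..<Suc N])) n" .
    qed auto
    have b2: "lp {1..N} (\<lambda>xs. hit x \<mu> N c2 0 0 xs n) \<le> exp (- (2 * c2\<^sup>2 / (D * S2)))"
    proof (rule opt_exp[OF D0 S20 c20])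
      fix L :: real assume L: "L > 0"
      have "lp {1..N} (\<lambda>xs. hit x \<mu> N c2 0 0 xs n) \<le> exp (L * 0 / (real N - real 0) - L * c2
          + L\<^sup>2 * ((b - a)\<^sup>2 / 8) * (\<Sum>i\<in>{Suc 0..0+n}. 1 / (real N - real i)\<^sup>2))"
        by (rule main_ind[where U="{1..N}", OF rng L]) (use nN z in simp_all)
      then show "lp {1..N} (\<lambda>xs. hit x \<mu> N c2 0 0 xs n) \<le> exp (- L * c2 + L\<^sup>2 * (D / 8) * S2)"
        by (simp add: Dh S2_def)
    qed
    have part2: "measure_pmf.prob (perm_pmf N)
           {\<pi>. Max ((\<lambda>k. centred_sum x \<mu> \<pi> k / (real N - real k)) ` {1..n})
                 \<ge> real n * \<epsilon> / (real N - real n)}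
         \<le> exp (- (2 * real n * \<epsilon>\<^sup>2) /
                 ((1 - (real n - 1) / real N) * (b - a)\<^sup>2))"
      using eq2 b2 fin2[OF D0 n1 nN S20 sqbound[OF nN, folded S2_def], of \<epsilon>]
      unfolding c2_def D_def by linarith
    define S1 where "S1 = (\<Sum>i\<in>{1..N-n}. 1 / (real N - real i)\<^sup>2)"
    have S10: "S1 > 0" unfolding S1_def
      using n1 nN by (intro sum_pos) auto
    have Nn: "N - n < N" using n1 nN by simp
    have eq1: "measure_pmf.prob (perm_pmf N)
           {\<pi>. Max ((\<lambda>k. centred_sum x \<mu> \<pi> k / real k) ` {n..N-1}) \<ge> \<epsilon>}
        = lp {1..N} (\<lambda>xs. hit (\<lambda>v. - x v) (- \<mu>) N \<epsilon> 0 0 xs (N - n))"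
    proof (rule prob_to_lp[where g = rev])
      fix \<pi> :: "nat \<Rightarrow> nat" assume p: "\<pi> permutes {1..N}"
      have "(\<epsilon> \<le> Max ((\<lambda>k. centred_sum x \<mu> \<pi> k / real k) ` {n..N-1}))
          \<longleftrightarrow> (\<exists>k\<in>{n..N-1}. \<epsilon> \<le> centred_sum x \<mu> \<pi> k / real k)"
        using nN by (subst Max_ge_iff) auto
      also have "\<dots> \<longleftrightarrow> (\<exists>i\<in>{1..N-n}. \<epsilon> \<le> (0 + (\<Sum>t<i. (- x (rev (map \<pi> [1..<Suc N]) ! t)) - (- \<mu>))) / (real N - real (0 + i)))"
      proof
        assume "\<exists>k\<in>{n..N-1}. \<epsilon> \<le> centred_sum x \<mu> \<pi> k / real k"
        then obtain k where k: "k \<in> {n..N-1}" "\<epsilon> \<le> centred_sum x \<mu> \<pi> k / real k" by blast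
        have kN: "k \<le> N" using k by auto
        have "N - k \<in> {1..N-n}" using k nN by auto
        moreover have "real N - real (0 + (N - k)) = real k" using kN by simp
        moreover have "N - (N - k) = k" using kN by simp
        ultimately show "\<exists>i\<in>{1..N-n}. \<epsilon> \<le> (0 + (\<Sum>t<i. (- x (rev (map \<pi> [1..<Suc N]) ! t)) - (- \<mu>))) / (real N - real (0 + i))"
          using k(2) cs_rev[OF p kN z] by (intro bexI[of _ "N - k"]) auto
      next
        assume "\<exists>i\<in>{1..N-n}. \<epsilon> \<le> (0 + (\<Sum>t<i. (- x (rev (map \<pi> [1..<Suc N]) ! t)) - (- \<mu>))) / (real N - real (0 + i))"
        then obtain i where i: "i \<in> {1..N-n}" "\<epsilon> \<le> (0 + (\<Sum>t<i. (- x (rev (map \<pi> [1..<Suc N]) ! t)) - (- \<mu>))) / (real N - real (0 + i))" by blast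
        have kN: "N - i \<le> N" by simp
        have "N - i \<in> {n..N-1}" using i nN by auto
        moreover have "real N - real (0 + i) = real (N - i)"
        proof -
          have "i \<le> N" using i by auto
          then show ?thesis by (simp add: of_nat_diff)
        qed
        moreover have "N - (N - i) = i" using i by (intro diff_diff_cancel) auto
        ultimately show "\<exists>k\<in>{n..N-1}. \<epsilon> \<le> centred_sum x \<mu> \<pi> k / real k"
          using i(2) cs_rev[OF p kN z] by (intro bexI[of _ "N - i"]) auto
      qed
      also have "\<dots> \<longleftrightarrow> hit (\<lambda>v. - x v) (- \<mu>) N \<epsilon> 0 0 (rev (map \<pi> [1..<Suc N])) (N - n)"
        by (subst hit_iff) auto
      finally show "(\<epsilon> \<le> Max ((\<lambda>k. centred_sum x \<mu> \<pi> k / real k) ` {n..N-1})) = hit (\<lambda>v. - x v) (- \<mu>) N \<epsilon> 0 0 (rev (map \<pi> [1..<Suc N])) (N - n)" .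
    qed (auto simp: inj_on_def)
    have rng': "(\<lambda>v. - x v) v \<in> {- b..- a}" if "v \<in> {1..N}" for v
      using rng[OF that] by auto
    have b1: "lp {1..N} (\<lambda>xs. hit (\<lambda>v. - x v) (- \<mu>) N \<epsilon> 0 0 xs (N - n)) \<le> exp (- (2 * \<epsilon>\<^sup>2 / (D * S1)))"
    proof (rule opt_exp[OF D0 S10 ep])
      fix L :: real assume L: "L > 0"
      have "lp {1..N} (\<lambda>xs. hit (\<lambda>v. - x v) (- \<mu>) N \<epsilon> 0 0 xs (N - n)) \<le> exp (L * 0 / (real N - real 0) - L * \<epsilon>
          + L\<^sup>2 * ((- a - - b)\<^sup>2 / 8) * (\<Sum>i\<in>{Suc 0..0+(N-n)}. 1 / (real N - real i)\<^sup>2))"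
        by (rule main_ind[where U="{1..N}", OF rng' L]) (use Nn z in \<open>auto simp: sum_negf[symmetric]\<close>)
      moreover have "(- a - - b)\<^sup>2 / 8 = D / 8" by (simp add: D_def)
      ultimately show "lp {1..N} (\<lambda>xs. hit (\<lambda>v. - x v) (- \<mu>) N \<epsilon> 0 0 xs (N - n)) \<le> exp (- L * \<epsilon> + L\<^sup>2 * (D / 8) * S1)"
        by (simp add: S1_def)
    qed
    have part1: "measure_pmf.prob (perm_pmf N)
           {\<pi>. Max ((\<lambda>k. centred_sum x \<mu> \<pi> k / real k) ` {n..N-1}) \<ge> \<epsilon>}
         \<le> exp (- (2 * real n * \<epsilon>\<^sup>2) /
                 ((1 - real n / real N) * (1 + 1 / real n) * (b - a)\<^sup>2))"
      using eq1 b1 fin1[OF D0 n1 nN S10 sqbound[OF Nn, folded S1_def], of \<epsilon>]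
      unfolding D_def by linarith
    show ?thesis using part1 part2 by blast
  qed
qed

end
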